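(* Let $(V,\sim)$ be a finite graph with side data $\mathrm{left}(\cdot),\mathrm{right}(\cdot)$ as in the context, and assume $(V,\sim)$ admits a conformal model. Let $Q\subseteq V$ be a prime node of the modular decomposition tree of $(V,\sim)$ with children $M_1,\ldots,M_n$, and let $U \subseteq Q$ contain exactly one vertex from each $M_j$. Fix $i \in \{1,\ldots,n\}$ and $v,w \in M_i$. (1) If $M_i$ is parallel (i.e. $(M_i,\sim)$ is disconnected), then the following are equivalent: (a) for every $u \in Q \setminus M_i$ with $u \parallel M_i$, either $\{v,w\} \subseteq \mathrm{left}(u)$ or $\{v,w\} \subseteq \mathrm{right}(u)$; (b) for every $u \in U \setminus M_i$ with $u \parallel M_i$, either $\{v,w\} \subseteq \mathrm{left}(u)$ or $\{v,w\} \subseteq \mathrm{right}(u)$. (2) If $M_i$ is serial (i.e. the complement of $(M_i,\sim)$ is disconnected), then the following are equivalent: (a) $\{\mathrm{left}(v) \cap (Q\setminus M_i), \mathrm{right}(v) \cap (Q \setminus M_i)\} = \{\mathrm{left}(w) \cap (Q\setminus M_i), \mathrm{right}(w) \cap (Q \setminus M_i)\}$; (b) $\{\mathrm{left}(v) \cap (U\setminus M_i), \mathrm{right}(v) \cap (U \setminus M_i)\} = \{\mathrm{left}(w) \cap (U\setminus M_i), \mathrm{right}(w) \cap (U \setminus M_i)\}$.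
   Context: Graph and side data. $(V,\sim)$ is a finite simple graph; $u \parallel v$ means $u \ne v$ and $u,v$ non-adjacent; for sets, $X\sim Y$ / $X \parallel Y$ means the relation holds for all pairs $x\in X$, $y\in Y$ (and $u \parallel M$ means $\{u\}\parallel M$). For every $u \in V$ we are given a partition of $\{v\in V: v \parallel u\}$ into $\mathrm{left}(u)$ and $\mathrm{right}(u)$. (In the paper $(V,\sim)$ is the overlap graph $G_{ov}$ of a circular-arc graph and the sides come from its arc model; conditions (a) in both items are the paper's definition of the $K$-relation on a parallel, resp. serial, child $M_i$.) Conformal models. For $X\subseteq V$, a conformal model of $(X,\sim)$ is a circular word (up to rotation) in which each letter $u^0,u^1$, $u \in X$, occurs exactly once, such that for distinct $u,v\in X$ the letters of $u$ and $v$ alternate iff $u \sim v$, and for $u \parallel v$ both letters of $v$ lie between $u^0$ and $u^1$ (reading cyclically forward from $u^0$) iff $v \in \mathrm{left}(u)$, and both lie between $u^1$ and $u^0$ iff $v \in \mathrm{right}(u)$. Modular decomposition. A module of $(X,\sim)$ is a set $M\subseteq X$ such that every vertex outside $M$ is adjacent to all or none of $M$; it is trivial if $|M|\le1$ or $M=X$; a graph is prime if it has only trivial modules. $Q$ is a prime node of the modular decomposition tree of $(V,\sim)$ whose children $M_1,\ldots,M_n$ are the maximal strong modules properly contained in $Q$, the quotient graph on one representative per child being prime. *)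

theory Defs
  imports Main
begin

definition nonadj :: "('a \<Rightarrow> 'a \<Rightarrow> bool) \<Rightarrow> 'a \<Rightarrow> 'a \<Rightarrow> bool" where
  "nonadj adj u v \<longleftrightarrow> u \<noteq> v \<and> \<not> adj u v"

definition simple_graph :: "'a set \<Rightarrow> ('a \<Rightarrow> 'a \<Rightarrow> bool) \<Rightarrow> bool" where
  "simple_graph V adj \<longleftrightarrow> finite V \<and> (\<forall>u v. adj u v \<longrightarrow> u \<in> V \<and> v \<in> V)
     \<and> (\<forall>u v. adj u v \<longrightarrow> adj v u) \<and> (\<forall>u. \<not> adj u u)"

definition side_data :: "'a set \<Rightarrow> ('a \<Rightarrow> 'a \<Rightarrow> bool) \<Rightarrow> ('a \<Rightarrow> 'a set) \<Rightarrow> ('a \<Rightarrow> 'a set) \<Rightarrow> bool" where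
  "side_data V adj left right \<longleftrightarrow> (\<forall>u\<in>V. left u \<union> right u = {v\<in>V. nonadj adj u v}
      \<and> left u \<inter> right u = {})"

text \<open>A circular word is represented by a list (any rotation); letter u^0 is (u,False),
  u^1 is (u,True). cbetween w a b x: x lies strictly between a and b reading
  cyclically forward from a.\<close>
definition cbetween :: "'b list \<Rightarrow> 'b \<Rightarrow> 'b \<Rightarrow> 'b \<Rightarrow> bool" where
  "cbetween w a b x \<longleftrightarrow> (\<exists>i j k. i < length w \<and> j < length w \<and> k < length w \<and>
      w ! i = a \<and> w ! j = b \<and> w ! k = x \<and>
      (if i < j then i < k \<and> k < j else (i < k \<or> k < j)))"

definition conformal_model :: "'a set \<Rightarrow> ('a \<Rightarrow> 'a \<Rightarrow> bool) \<Rightarrow> ('a \<Rightarrow> 'a set) \<Rightarrow> ('a \<Rightarrow> 'a set)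
    \<Rightarrow> ('a \<times> bool) list \<Rightarrow> bool" where
  "conformal_model X adj left right w \<longleftrightarrow> distinct w \<and> set w = X \<times> UNIV \<and>
     (\<forall>u\<in>X. \<forall>v\<in>X. u \<noteq> v \<longrightarrow>
        ((cbetween w (u,False) (u,True) (v,False) \<noteq> cbetween w (u,False) (u,True) (v,True))
            \<longleftrightarrow> adj u v)
      \<and> (nonadj adj u v \<longrightarrow>
          ((cbetween w (u,False) (u,True) (v,False) \<and> cbetween w (u,False) (u,True) (v,True))
              \<longleftrightarrow> v \<in> left u)
        \<and> ((cbetween w (u,True) (u,False) (v,False) \<and> cbetween w (u,True) (u,False) (v,True))
              \<longleftrightarrow> v \<in> right u)))"

definition has_conformal_model :: "'a set \<Rightarrow> ('a \<Rightarrow> 'a \<Rightarrow> bool) \<Rightarrow> ('a \<Rightarrow> 'a set) \<Rightarrow> ('a \<Rightarrow> 'a set) \<Rightarrow> bool" where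
  "has_conformal_model X adj left right \<longleftrightarrow> (\<exists>w. conformal_model X adj left right w)"

definition is_module :: "'a set \<Rightarrow> ('a \<Rightarrow> 'a \<Rightarrow> bool) \<Rightarrow> 'a set \<Rightarrow> bool" where
  "is_module X adj M \<longleftrightarrow> M \<subseteq> X \<and>
     (\<forall>x\<in>X - M. (\<forall>m\<in>M. adj x m) \<or> (\<forall>m\<in>M. \<not> adj x m))"

definition trivial_module :: "'a set \<Rightarrow> 'a set \<Rightarrow> bool" where
  "trivial_module X M \<longleftrightarrow> card M \<le> 1 \<or> M = X"

definition prime_graph :: "'a set \<Rightarrow> ('a \<Rightarrow> 'a \<Rightarrow> bool) \<Rightarrow> bool" where
  "prime_graph X adj \<longleftrightarrow> (\<forall>M. is_module X adj M \<longrightarrow> trivial_module X M)"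

definition strong_module :: "'a set \<Rightarrow> ('a \<Rightarrow> 'a \<Rightarrow> bool) \<Rightarrow> 'a set \<Rightarrow> bool" where
  "strong_module X adj M \<longleftrightarrow> is_module X adj M \<and>
     (\<forall>N. is_module X adj N \<longrightarrow> M \<inter> N = {} \<or> M \<subseteq> N \<or> N \<subseteq> M)"

definition md_node :: "'a set \<Rightarrow> ('a \<Rightarrow> 'a \<Rightarrow> bool) \<Rightarrow> 'a set \<Rightarrow> bool" where
  "md_node V adj Q \<longleftrightarrow> strong_module V adj Q \<and> Q \<noteq> {}"

definition md_children :: "'a set \<Rightarrow> ('a \<Rightarrow> 'a \<Rightarrow> bool) \<Rightarrow> 'a set \<Rightarrow> 'a set set" where
  "md_children V adj Q = {M. md_node V adj M \<and> M \<subset> Q \<and>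
      \<not> (\<exists>N. strong_module V adj N \<and> M \<subset> N \<and> N \<subset> Q)}"

definition representatives :: "'a set set \<Rightarrow> 'a set \<Rightarrow> bool" where
  "representatives Ms U \<longleftrightarrow> U \<subseteq> \<Union>Ms \<and> (\<forall>M\<in>Ms. card (U \<inter> M) = 1)"

definition connected_graph :: "'a set \<Rightarrow> ('a \<Rightarrow> 'a \<Rightarrow> bool) \<Rightarrow> bool" where
  "connected_graph X r \<longleftrightarrow> X \<noteq> {} \<and>
     (\<forall>x\<in>X. \<forall>y\<in>X. (x, y) \<in> ({(a, b). a \<in> X \<and> b \<in> X \<and> r a b})\<^sup>*)"

definition complement_rel :: "('a \<Rightarrow> 'a \<Rightarrow> bool) \<Rightarrow> 'a \<Rightarrow> 'a \<Rightarrow> bool" where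
  "complement_rel adj = nonadj adj"

text \<open>Prime node: a node whose quotient (graph on one representative per child) is prime,
  and which is neither parallel nor serial (at least three children).\<close>
definition prime_node :: "'a set \<Rightarrow> ('a \<Rightarrow> 'a \<Rightarrow> bool) \<Rightarrow> 'a set \<Rightarrow> bool" where
  "prime_node V adj Q \<longleftrightarrow> md_node V adj Q \<and> card (md_children V adj Q) \<ge> 3 \<and>
     (\<exists>R. representatives (md_children V adj Q) R \<and> prime_graph R adj)"

definition parallel_module :: "('a \<Rightarrow> 'a \<Rightarrow> bool) \<Rightarrow> 'a set \<Rightarrow> bool" where
  "parallel_module adj M \<longleftrightarrow> \<not> connected_graph M adj"

definition serial_module :: "('a \<Rightarrow> 'a \<Rightarrow> bool) \<Rightarrow> 'a set \<Rightarrow> bool" where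
  "serial_module adj M \<longleftrightarrow> \<not> connected_graph M (complement_rel adj)"

end

theory Submission
  imports Defs
begin

section \<open>Cyclic arithmetic\<close>
definition C :: "nat \<Rightarrow> nat \<Rightarrow> nat \<Rightarrow> bool" where
  "C i j k \<longleftrightarrow> (if i < j then i < k \<and> k < j else (i < k \<or> k < j))"
definition rho :: "nat \<Rightarrow> nat \<Rightarrow> nat \<Rightarrow> nat" where
  "rho L x k = (if x \<le> k then k - x else k + L - x)"

lemma C_rot:
  assumes "i < L" "j < L" "k < L" "x < L" "i \<noteq> j" "j \<noteq> k" "i \<noteq> k"
  shows "C (rho L x i) (rho L x j) (rho L x k) = C i j k"
  using assms unfolding C_def rho_def by auto

lemma rho_lt: "k < L \<Longrightarrow> x < L \<Longrightarrow> rho L x k < L"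
  unfolding rho_def by auto
lemma rho_inj: "k < L \<Longrightarrow> x < L \<Longrightarrow> k' < L \<Longrightarrow> rho L x k = rho L x k' \<longleftrightarrow> k = k'"
  unfolding rho_def by (auto split: if_splits)
lemma rho_0: "rho L x x = 0" unfolding rho_def by auto
lemma rho_eq0: "k < L \<Longrightarrow> x < L \<Longrightarrow> rho L x k = 0 \<longleftrightarrow> k = x"
  unfolding rho_def by auto

lemma X_sym:
  assumes "distinct [a0,a1,b0,b1]"
  shows "(C a0 a1 b0 \<noteq> C a0 a1 b1) = (C b0 b1 a0 \<noteq> C b0 b1 a1)"
  using assms unfolding C_def by auto

lemma F0:
  assumes "a0 = 0" "distinct [a0,a1,x0,x1,d0,d1]"
  and "C a0 a1 x0 = C a0 a1 x1" "C a0 a1 d0 = C a0 a1 d1" "C a0 a1 x0 \<noteq> C a0 a1 d0"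
  shows "C x0 x1 d0 = C x0 x1 d1"
  using assms unfolding C_def by auto

lemma F:
  assumes "distinct [a0,a1,x0,x1,d0,d1]" "a0 < L" "a1 < L" "x0 < L" "x1 < L" "d0 < L" "d1 < L"
  and "C a0 a1 x0 = C a0 a1 x1" "C a0 a1 d0 = C a0 a1 d1" "C a0 a1 x0 \<noteq> C a0 a1 d0"
  shows "C x0 x1 d0 = C x0 x1 d1"
proof -
  let ?r = "rho L a0"
  have R: "C (?r i) (?r j) (?r k) = C i j k" if "i<L" "j<L" "k<L" "i\<noteq>j" "j\<noteq>k" "i\<noteq>k" for i j k
    using C_rot that assms(2) by blast
  have I: "?r i = ?r j \<longleftrightarrow> i = j" if "i<L" "j<L" for i j using rho_inj that assms(2) by blast
  have "C (?r x0) (?r x1) (?r d0) = C (?r x0) (?r x1) (?r d1)"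
    apply (rule F0[of "?r a0" "?r a1" "?r x0" "?r x1" "?r d0" "?r d1"])
    using assms by (simp_all add: R I rho_eq0)
  then show ?thesis using assms by (simp add: R)
qed

lemma foot:
  assumes "C 0 e y0 \<noteq> C 0 e y1" "distinct [0,e,y0,y1]"
  shows "\<exists>f g. f < e \<and> e < g \<and> ((y0 = f \<and> y1 = g) \<or> (y0 = g \<and> y1 = f))"
  using assms unfolding C_def by (cases "y0 < e") auto

lemma Cfoot:
  assumes "(a0 = fa \<and> a1 = ga) \<or> (a0 = ga \<and> a1 = fa)" "fa < ga" "k \<noteq> fa" "k \<noteq> ga"
  shows "C a0 a1 k = ((fa < k \<and> k < ga) = (a0 = fa))"
  using assms unfolding C_def by auto

lemma side1:
  assumes A: "(a0 = fa \<and> a1 = ga) \<or> (a0 = ga \<and> a1 = fa)" "fa < e" "e < ga"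
  and Cc: "(c0 = fc \<and> c1 = gc) \<or> (c0 = gc \<and> c1 = fc)" "fc < e"
  and ne: "fa \<noteq> fc" "ga \<noteq> fc"
  and ac: "C a0 a1 c0 = C a0 a1 c1"
  shows "C a0 a1 c0 = ((fa < fc) = (a0 = fa))"
proof -
  have "C a0 a1 c0 = C a0 a1 fc" using Cc(1) ac by auto
  also have "\<dots> = ((fa < fc \<and> fc < ga) = (a0 = fa))"
    by (rule Cfoot[OF A(1)]) (use A ne in auto)
  also have "(fa < fc \<and> fc < ga) = (fa < fc)" using A Cc(2) by auto
  finally show ?thesis .
qed

lemma rotE:
  assumes "C i j k = C i j l" "i<L" "j<L" "k<L" "l<L" "x<L" "distinct [i,j,k,l]"
  shows "C (rho L x i) (rho L x j) (rho L x k) = C (rho L x i) (rho L x j) (rho L x l)"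
  using assms C_rot[of i L j k x] C_rot[of i L j l x] by simp

lemma rotN:
  assumes "C i j k \<noteq> C i j l" "i<L" "j<L" "k<L" "l<L" "x<L" "distinct [i,j,k,l]"
  shows "C (rho L x i) (rho L x j) (rho L x k) \<noteq> C (rho L x i) (rho L x j) (rho L x l)"
  using assms C_rot[of i L j k x] C_rot[of i L j l x] by simp

lemma neq2: "x \<in> S \<Longrightarrow> y \<in> T \<Longrightarrow> S \<inter> T = {} \<Longrightarrow> x \<noteq> y" by auto

lemma fin4:
  fixes fa fb fc fd :: nat
  assumes "(fa < fc) \<noteq> (fa < fd)" "(fb < fc) = (fb < fd)" "(fc < fb) = (fc < fa)" "(fd < fb) = (fd < fa)"
   "fa \<noteq> fb" "fa \<noteq> fc" "fa \<noteq> fd" "fb \<noteq> fc" "fb \<noteq> fd" "fc \<noteq> fd"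
  shows False
  using assms by (cases "fc < fd") auto

lemma Ga0:
  assumes e0: "e0 = 0" and dist: "distinct [e0,e,a0,a1,b0,b1,c0,c1,d0,d1]"
  and xa: "C e0 e a0 \<noteq> C e0 e a1" and xb: "C e0 e b0 \<noteq> C e0 e b1"
  and xc: "C e0 e c0 \<noteq> C e0 e c1" and xd: "C e0 e d0 \<noteq> C e0 e d1"
  and ac: "C a0 a1 c0 = C a0 a1 c1" and ad: "C a0 a1 d0 = C a0 a1 d1"
  and bc: "C b0 b1 c0 = C b0 b1 c1" and bd: "C b0 b1 d0 = C b0 b1 d1"
  and ca: "C c0 c1 a0 = C c0 c1 a1" and cb: "C c0 c1 b0 = C c0 c1 b1"
  and da: "C d0 d1 a0 = C d0 d1 a1" and db: "C d0 d1 b0 = C d0 d1 b1"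
  and s1: "C a0 a1 c0 \<noteq> C a0 a1 d0" and s2: "C b0 b1 c0 = C b0 b1 d0"
  and s3: "C c0 c1 b0 = C c0 c1 a0" and s4: "C d0 d1 b0 = C d0 d1 a0"
  shows False
proof -
  obtain fa ga where A: "(a0 = fa \<and> a1 = ga) \<or> (a0 = ga \<and> a1 = fa)" "fa < e" "e < ga"
    using foot[of e a0 a1] xa dist e0 by auto
  obtain fb gb where B: "(b0 = fb \<and> b1 = gb) \<or> (b0 = gb \<and> b1 = fb)" "fb < e" "e < gb"
    using foot[of e b0 b1] xb dist e0 by auto
  obtain fc gc where Cc: "(c0 = fc \<and> c1 = gc) \<or> (c0 = gc \<and> c1 = fc)" "fc < e" "e < gc"
    using foot[of e c0 c1] xc dist e0 by auto
  obtain fd gd where D: "(d0 = fd \<and> d1 = gd) \<or> (d0 = gd \<and> d1 = fd)" "fd < e" "e < gd"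
    using foot[of e d0 d1] xd dist e0 by auto
  have mA: "fa \<in> {a0,a1}" "ga \<in> {a0,a1}" using A(1) by auto
  have mB: "fb \<in> {b0,b1}" "gb \<in> {b0,b1}" using B(1) by auto
  have mC: "fc \<in> {c0,c1}" "gc \<in> {c0,c1}" using Cc(1) by auto
  have mD: "fd \<in> {d0,d1}" "gd \<in> {d0,d1}" using D(1) by auto
  have dj: "{a0,a1} \<inter> {b0,b1} = {}" "{a0,a1} \<inter> {c0,c1} = {}" "{a0,a1} \<inter> {d0,d1} = {}"
    "{b0,b1} \<inter> {c0,c1} = {}" "{b0,b1} \<inter> {d0,d1} = {}" "{c0,c1} \<inter> {d0,d1} = {}"
    using dist by auto
  have ab: "fa \<noteq> fb" "fa \<noteq> gb" "ga \<noteq> fb" using neq2 mA mB dj(1) by metis+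
  have ac': "fa \<noteq> fc" "fa \<noteq> gc" "ga \<noteq> fc" using neq2 mA mC dj(2) by metis+
  have ad': "fa \<noteq> fd" "fa \<noteq> gd" "ga \<noteq> fd" using neq2 mA mD dj(3) by metis+
  have bc': "fb \<noteq> fc" "fb \<noteq> gc" "gb \<noteq> fc" using neq2 mB mC dj(4) by metis+
  have bd': "fb \<noteq> fd" "fb \<noteq> gd" "gb \<noteq> fd" using neq2 mB mD dj(5) by metis+
  have cd': "fc \<noteq> fd" "fc \<noteq> gd" "gc \<noteq> fd" using neq2 mC mD dj(6) by metis+
  have 1: "(fa < fc) \<noteq> (fa < fd)"
    using side1[OF A Cc(1,2) ac'(1) ac'(3) ac] side1[OF A D(1,2) ad'(1) ad'(3) ad] s1 by auto
  have 2: "(fb < fc) = (fb < fd)"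
    using side1[OF B Cc(1,2) bc'(1) bc'(3) bc] side1[OF B D(1,2) bd'(1) bd'(3) bd] s2 by auto
  have 3: "(fc < fb) = (fc < fa)"
    using side1[OF Cc B(1,2) not_sym[OF bc'(1)] not_sym[OF bc'(2)] cb] side1[OF Cc A(1,2) not_sym[OF ac'(1)] not_sym[OF ac'(2)] ca] s3 by auto
  have 4: "(fd < fb) = (fd < fa)"
    using side1[OF D B(1,2) not_sym[OF bd'(1)] not_sym[OF bd'(2)] db] side1[OF D A(1,2) not_sym[OF ad'(1)] not_sym[OF ad'(2)] da] s4 by auto
  show False by (rule fin4[OF 1 2 3 4 ab(1) ac'(1) ad'(1) bc'(1) bd'(1) cd'(1)])
qed

lemma Ga:
  assumes L: "e0 < L" "e1 < L" "a0 < L" "a1 < L" "b0 < L" "b1 < L" "c0 < L" "c1 < L" "d0 < L" "d1 < L"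
  and dist: "distinct [e0,e1,a0,a1,b0,b1,c0,c1,d0,d1]"
  and xa: "C e0 e1 a0 \<noteq> C e0 e1 a1" and xb: "C e0 e1 b0 \<noteq> C e0 e1 b1"
  and xc: "C e0 e1 c0 \<noteq> C e0 e1 c1" and xd: "C e0 e1 d0 \<noteq> C e0 e1 d1"
  and ac: "C a0 a1 c0 = C a0 a1 c1" and ad: "C a0 a1 d0 = C a0 a1 d1"
  and bc: "C b0 b1 c0 = C b0 b1 c1" and bd: "C b0 b1 d0 = C b0 b1 d1"
  and ca: "C c0 c1 a0 = C c0 c1 a1" and cb: "C c0 c1 b0 = C c0 c1 b1"
  and da: "C d0 d1 a0 = C d0 d1 a1" and db: "C d0 d1 b0 = C d0 d1 b1"
  and s1: "C a0 a1 c0 \<noteq> C a0 a1 d0" and s2: "C b0 b1 c0 = C b0 b1 d0"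
  and s3: "C c0 c1 b0 = C c0 c1 a0" and s4: "C d0 d1 b0 = C d0 d1 a0"
  shows False
proof -
  let ?r = "rho L e0"
  have R: "C (?r i) (?r j) (?r k) = C i j k" if "i<L" "j<L" "k<L" "i\<noteq>j" "j\<noteq>k" "i\<noteq>k" for i j k
    using C_rot that L(1) by blast
  have I: "?r i = ?r j \<longleftrightarrow> i = j" if "i<L" "j<L" for i j using rho_inj that L(1) by blast
  show False
    apply (rule Ga0[of "?r e0" "?r e1" "?r a0" "?r a1" "?r b0" "?r b1" "?r c0" "?r c1" "?r d0" "?r d1"])
    subgoal using L by (simp add: rho_eq0)
    subgoal using L dist by (simp add: I)
    subgoal apply (rule rotN[OF xa]) using L dist by auto
    subgoal apply (rule rotN[OF xb]) using L dist by auto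
    subgoal apply (rule rotN[OF xc]) using L dist by auto
    subgoal apply (rule rotN[OF xd]) using L dist by auto
    subgoal apply (rule rotE[OF ac]) using L dist by auto
    subgoal apply (rule rotE[OF ad]) using L dist by auto
    subgoal apply (rule rotE[OF bc]) using L dist by auto
    subgoal apply (rule rotE[OF bd]) using L dist by auto
    subgoal apply (rule rotE[OF ca]) using L dist by auto
    subgoal apply (rule rotE[OF cb]) using L dist by auto
    subgoal apply (rule rotE[OF da]) using L dist by auto
    subgoal apply (rule rotE[OF db]) using L dist by auto
    subgoal apply (rule rotN[OF s1]) using L dist by auto
    subgoal apply (rule rotE[OF s2]) using L dist by auto
    subgoal apply (rule rotE[OF s3]) using L dist by auto
    subgoal apply (rule rotE[OF s4]) using L dist by auto
    done
qed

lemma Sep: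
  assumes L: "s0 < L" "s1 < L" "p0 < L" "p1 < L" "q0 < L" "q1 < L" "x0 < L" "x1 < L"
  and dist: "distinct [s0,s1,p0,p1,q0,q1,x0,x1]"
  and sp: "C s0 s1 p0 = C s0 s1 p1" and sq: "C s0 s1 q0 = C s0 s1 q1"
  and spq: "C s0 s1 p0 \<noteq> C s0 s1 q0"
  and xp: "C x0 x1 p0 \<noteq> C x0 x1 p1" and xq: "C x0 x1 q0 \<noteq> C x0 x1 q1"
  shows "C s0 s1 x0 \<noteq> C s0 s1 x1"
proof
  assume sx: "C s0 s1 x0 = C s0 s1 x1"
  show False
  proof (cases "C s0 s1 x0 = C s0 s1 p0")
    case True
    then have "C s0 s1 x0 \<noteq> C s0 s1 q0" using spq by simp
    then have "C x0 x1 q0 = C x0 x1 q1"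
      using F[of s0 s1 x0 x1 q0 q1 L] L dist sx sq by auto
    then show False using xq by simp
  next
    case False
    then have "C x0 x1 p0 = C x0 x1 p1"
      using F[of s0 s1 x0 x1 p0 p1 L] L dist sx sp by auto
    then show False using xp by simp
  qed
qed


definition P :: "'b list \<Rightarrow> 'b \<Rightarrow> nat" where
  "P wd a = (THE i. i < length wd \<and> wd ! i = a)"

lemma P_prop:
  assumes d: "distinct wd" and a: "a \<in> set wd"
  shows "P wd a < length wd \<and> wd ! P wd a = a"
proof -
  obtain i where i: "i < length wd" "wd ! i = a" using a by (auto simp: in_set_conv_nth)
  have "P wd a = i" unfolding P_def
  proof (rule the_equality)
    show "i < length wd \<and> wd ! i = a" using i by simp
    fix j assume "j < length wd \<and> wd ! j = a"
    then show "j = i" using i nth_eq_iff_index_eq[OF d, of j i] by simp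
  qed
  with i show ?thesis by simp
qed

lemma P_unique:
  assumes d: "distinct wd" and i: "i < length wd" "wd ! i = a"
  shows "P wd a = i"
proof -
  have a: "a \<in> set wd" using i by (metis nth_mem)
  have "P wd a < length wd" "wd ! P wd a = a" using P_prop[OF d a] by auto
  then show ?thesis using i nth_eq_iff_index_eq[OF d, of "P wd a" i] by simp
qed

lemma P_inj:
  assumes d: "distinct wd" and "a \<in> set wd" "b \<in> set wd"
  shows "P wd a = P wd b \<longleftrightarrow> a = b"
proof
  assume h: "P wd a = P wd b"
  have "a = wd ! P wd a" using P_prop[OF d assms(2)] by simp
  also have "\<dots> = wd ! P wd b" using h by simp
  also have "\<dots> = b" using P_prop[OF d assms(3)] by simp
  finally show "a = b" .
qed simp

lemma cb_C:
  assumes d: "distinct wd" and a: "a \<in> set wd" and b: "b \<in> set wd" and x: "x \<in> set wd"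
  shows "cbetween wd a b x \<longleftrightarrow> C (P wd a) (P wd b) (P wd x)"
proof
  assume "cbetween wd a b x"
  then obtain i j k where ijk: "i < length wd" "j < length wd" "k < length wd"
      "wd ! i = a" "wd ! j = b" "wd ! k = x"
      "(if i < j then i < k \<and> k < j else (i < k \<or> k < j))"
    unfolding cbetween_def by blast
  have "P wd a = i" "P wd b = j" "P wd x = k" using P_unique[OF d] ijk(1-6) by auto
  then show "C (P wd a) (P wd b) (P wd x)" using ijk(7) unfolding C_def by simp
next
  assume c: "C (P wd a) (P wd b) (P wd x)"
  show "cbetween wd a b x" unfolding cbetween_def
    apply (rule exI[of _ "P wd a"], rule exI[of _ "P wd b"], rule exI[of _ "P wd x"])
    using P_prop[OF d a] P_prop[OF d b] P_prop[OF d x] c unfolding C_def by simp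
qed

lemma pair_eq:
  assumes h1: "\<forall>z\<in>S. (z\<in>A \<or> z\<in>B) \<longleftrightarrow> z\<in>Z" and h2: "\<forall>z\<in>S. \<not>(z\<in>A \<and> z\<in>B)"
    and h3: "\<forall>z\<in>S. (z\<in>Cs \<or> z\<in>D) \<longleftrightarrow> z\<in>Z" and h4: "\<forall>z\<in>S. \<not>(z\<in>Cs \<and> z\<in>D)"
  shows "{A\<inter>S, B\<inter>S} = {Cs\<inter>S, D\<inter>S} \<longleftrightarrow>
     ((\<forall>z\<in>Z\<inter>S. (z\<in>A) = (z\<in>Cs)) \<or> (\<forall>z\<in>Z\<inter>S. (z\<in>A) \<noteq> (z\<in>Cs)))"
proof -
  have e1: "(A\<inter>S = Cs\<inter>S \<and> B\<inter>S = D\<inter>S) \<longleftrightarrow> (\<forall>z\<in>Z\<inter>S. (z\<in>A) = (z\<in>Cs))"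
    using assms by blast
  have e2: "(A\<inter>S = D\<inter>S \<and> B\<inter>S = Cs\<inter>S) \<longleftrightarrow> (\<forall>z\<in>Z\<inter>S. (z\<in>A) \<noteq> (z\<in>Cs))"
    using assms by blast
  show ?thesis unfolding doubleton_eq_iff using e1 e2 by blast
qed

locale setting =
  fixes V :: "'a set" and adj :: "'a \<Rightarrow> 'a \<Rightarrow> bool" and left right :: "'a \<Rightarrow> 'a set"
    and Q R :: "'a set" and wd :: "('a \<times> bool) list"
  assumes sg: "simple_graph V adj" and sd: "side_data V adj left right"
    and cm: "conformal_model V adj left right wd"
    and Qn: "md_node V adj Q" and ch3: "card (md_children V adj Q) \<ge> 3"
    and Rrep: "representatives (md_children V adj Q) R" and Rpr: "prime_graph R adj"
begin

abbreviation "ch \<equiv> md_children V adj Q"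

definition pp :: "'a \<Rightarrow> bool \<Rightarrow> nat" where "pp u b = P wd (u,b)"

abbreviation "Cu u k \<equiv> C (pp u False) (pp u True) k"

lemma finV: "finite V" using sg unfolding simple_graph_def by auto
lemma adjV: "adj u v \<Longrightarrow> u \<in> V \<and> v \<in> V" using sg unfolding simple_graph_def by blast
lemma adj_sym: "adj u v \<Longrightarrow> adj v u" using sg unfolding simple_graph_def by blast
lemma dwd: "distinct wd" using cm unfolding conformal_model_def by auto
lemma swd: "set wd = V \<times> UNIV" using cm unfolding conformal_model_def by auto
lemma inwd: "u \<in> V \<Longrightarrow> (u,b) \<in> set wd" using swd by auto
lemma pp_lt: "u \<in> V \<Longrightarrow> pp u b < length wd"
  unfolding pp_def using P_prop[OF dwd inwd] by blast
lemma pp_eq: "u \<in> V \<Longrightarrow> v \<in> V \<Longrightarrow> pp u b = pp v c \<longleftrightarrow> (u = v \<and> b = c)"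
  unfolding pp_def using P_inj[OF dwd inwd inwd] by simp
lemma cbC: "u \<in> V \<Longrightarrow> v \<in> V \<Longrightarrow>
    cbetween wd (u,False) (u,True) (v,b) \<longleftrightarrow> Cu u (pp v b)"
  unfolding pp_def using cb_C[OF dwd inwd inwd inwd] by blast

lemma cmD:
  assumes "u \<in> V" "v \<in> V" "u \<noteq> v"
  shows "((cbetween wd (u,False) (u,True) (v,False) \<noteq> cbetween wd (u,False) (u,True) (v,True))
            \<longleftrightarrow> adj u v)
      \<and> (nonadj adj u v \<longrightarrow>
          ((cbetween wd (u,False) (u,True) (v,False) \<and> cbetween wd (u,False) (u,True) (v,True))
              \<longleftrightarrow> v \<in> left u))"
  using cm assms unfolding conformal_model_def by blast

lemma adjC:
  assumes "u \<in> V" "v \<in> V" "u \<noteq> v"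
  shows "adj u v \<longleftrightarrow> Cu u (pp v False) \<noteq> Cu u (pp v True)"
  using cmD[OF assms] cbC assms by simp

lemma nadjC:
  assumes "u \<in> V" "v \<in> V" "u \<noteq> v" "\<not> adj u v"
  shows "Cu u (pp v False) = Cu u (pp v True)"
  using adjC assms by blast

lemma leftC:
  assumes "u \<in> V" "v \<in> V" "nonadj adj u v"
  shows "v \<in> left u \<longleftrightarrow> Cu u (pp v False)"
proof -
  have uv: "u \<noteq> v" "\<not> adj u v" using assms(3) unfolding nonadj_def by auto
  have "(cbetween wd (u,False) (u,True) (v,False) \<and> cbetween wd (u,False) (u,True) (v,True))
      \<longleftrightarrow> v \<in> left u" using cmD[OF assms(1,2) uv(1)] assms(3) by blast
  then show ?thesis using cbC assms nadjC[OF assms(1,2) uv] by simp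
qed

lemma rightC:
  assumes "u \<in> V" "v \<in> V" "nonadj adj u v"
  shows "v \<in> right u \<longleftrightarrow> \<not> Cu u (pp v False)"
proof -
  have "left u \<union> right u = {v\<in>V. nonadj adj u v}" "left u \<inter> right u = {}"
    using sd assms(1) unfolding side_data_def by auto
  then have "v \<in> right u \<longleftrightarrow> v \<notin> left u" using assms by blast
  then show ?thesis using leftC[OF assms] by simp
qed

lemma ssC:
  assumes "u \<in> V" "v \<in> V" "x \<in> V" "nonadj adj u v" "nonadj adj u x"
  shows "({v,x} \<subseteq> left u \<or> {v,x} \<subseteq> right u) \<longleftrightarrow> (Cu u (pp v False) = Cu u (pp x False))"
  using leftC[OF assms(1,2,4)] leftC[OF assms(1,3,5)] rightC[OF assms(1,2,4)] rightC[OF assms(1,3,5)]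
  by auto

lemma gsep:
  assumes V: "s \<in> V" "p \<in> V" "q \<in> V" "x \<in> V" and d: "distinct [s,p,q,x]"
    and sp: "\<not> adj s p" and sq: "\<not> adj s q"
    and spq: "Cu s (pp p False) \<noteq> Cu s (pp q False)"
    and xp: "adj x p" and xq: "adj x q"
  shows "adj x s"
proof -
  have ds: "distinct [pp s False, pp s True, pp p False, pp p True, pp q False, pp q True, pp x False, pp x True]"
    using V d by (simp add: pp_eq)
  have "Cu s (pp x False) \<noteq> Cu s (pp x True)"
    by (rule Sep[OF pp_lt[OF V(1), of False] pp_lt[OF V(1), of True] pp_lt[OF V(2), of False]
        pp_lt[OF V(2), of True] pp_lt[OF V(3), of False] pp_lt[OF V(3), of True]
        pp_lt[OF V(4), of False] pp_lt[OF V(4), of True] ds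
        nadjC[OF V(1,2) _ sp] nadjC[OF V(1,3) _ sq] spq
        adjC[OF V(4,2), THEN iffD1, OF _ xp] adjC[OF V(4,3), THEN iffD1, OF _ xq]])
      (use d in auto)
  then have "adj s x" using adjC[OF V(1,4)] d by auto
  then show ?thesis using adj_sym by blast
qed

lemma gA:
  assumes V: "u \<in> V" "u' \<in> V" "v \<in> V" "w \<in> V" "x \<in> V" and d: "distinct [u,u',v,w,x]"
    and n: "\<not> adj u v" "\<not> adj u w" "\<not> adj u' v" "\<not> adj u' w"
    and s1: "Cu u (pp v False) \<noteq> Cu u (pp w False)"
    and s2: "Cu u' (pp v False) = Cu u' (pp w False)"
    and s3: "Cu v (pp u' False) = Cu v (pp u False)"
    and s4: "Cu w (pp u' False) = Cu w (pp u False)"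
    and x: "adj x u" "adj x u'" "adj x v" "adj x w"
  shows False
proof -
  have n': "\<not> adj v u" "\<not> adj w u" "\<not> adj v u'" "\<not> adj w u'" using n adj_sym by blast+
  have ds: "distinct [pp x False, pp x True, pp u False, pp u True, pp u' False, pp u' True,
       pp v False, pp v True, pp w False, pp w True]"
    using V d by (auto simp: pp_eq)
  show False
    by (rule Ga[OF pp_lt[OF V(5), of False] pp_lt[OF V(5), of True] pp_lt[OF V(1), of False]
        pp_lt[OF V(1), of True] pp_lt[OF V(2), of False] pp_lt[OF V(2), of True]
        pp_lt[OF V(3), of False] pp_lt[OF V(3), of True]
        pp_lt[OF V(4), of False] pp_lt[OF V(4), of True] ds
        adjC[OF V(5,1), THEN iffD1, OF _ x(1)] adjC[OF V(5,2), THEN iffD1, OF _ x(2)]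
        adjC[OF V(5,3), THEN iffD1, OF _ x(3)] adjC[OF V(5,4), THEN iffD1, OF _ x(4)]
        nadjC[OF V(1,3) _ n(1)] nadjC[OF V(1,4) _ n(2)] nadjC[OF V(2,3) _ n(3)] nadjC[OF V(2,4) _ n(4)]
        nadjC[OF V(3,1) _ n'(1)] nadjC[OF V(3,2) _ n'(3)] nadjC[OF V(4,1) _ n'(2)] nadjC[OF V(4,2) _ n'(4)]
        s1 s2 s3 s4])
      (use d in auto)
qed

section \<open>Modular decomposition facts\<close>

lemma QV: "Q \<subseteq> V"
  using Qn unfolding md_node_def strong_module_def is_module_def by auto

lemma chD:
  assumes "K \<in> ch"
  shows "is_module V adj K" "strong_module V adj K" "K \<noteq> {}" "K \<subset> Q"
    "\<not> (\<exists>N. strong_module V adj N \<and> K \<subset> N \<and> N \<subset> Q)"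
  using assms unfolding md_children_def md_node_def strong_module_def by auto

lemma chV: "K \<in> ch \<Longrightarrow> K \<subseteq> V" using chD(4) QV by blast

lemma uniform:
  assumes "is_module V adj K" "x \<in> V" "x \<notin> K" "a \<in> K" "b \<in> K" "adj x a"
  shows "adj x b"
  using assms unfolding is_module_def by blast

lemma ch_disj:
  assumes K: "K \<in> ch" and K': "K' \<in> ch" and ne: "K \<noteq> K'"
  shows "K \<inter> K' = {}"
proof -
  have "K \<inter> K' = {} \<or> K \<subseteq> K' \<or> K' \<subseteq> K"
    using chD(2)[OF K] chD(1)[OF K'] unfolding strong_module_def by blast
  moreover have "\<not> K \<subset> K'" using chD(5)[OF K] chD(2,4)[OF K'] by blast
  moreover have "\<not> K' \<subset> K" using chD(5)[OF K'] chD(2,4)[OF K] by blast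
  ultimately show ?thesis using ne by blast
qed

lemma ch_cover:
  assumes x: "x \<in> Q"
  shows "\<exists>K\<in>ch. x \<in> K"
proof -
  let ?F = "{N. strong_module V adj N \<and> x \<in> N \<and> N \<subset> Q}"
  have xV: "x \<in> V" using x QV by blast
  have fin: "finite ?F"
  proof (rule finite_subset[of _ "Pow V"])
    show "?F \<subseteq> Pow V" unfolding strong_module_def is_module_def by blast
    show "finite (Pow V)" using finV by simp
  qed
  have sx: "strong_module V adj {x}"
    unfolding strong_module_def is_module_def using xV by auto
  have "Q \<noteq> {x}"
  proof
    assume Qx: "Q = {x}"
    have "ch = {}"
    proof (rule ccontr)
      assume "ch \<noteq> {}"
      then obtain K where "K \<in> ch" by blast
      then show False using chD(3,4) Qx by blast
    qed
    then show False using ch3 by simp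
  qed
  then have "{x} \<in> ?F" using sx x by auto
  then obtain N0 where N0: "N0 \<in> ?F" "\<forall>b\<in>?F. N0 \<le> b \<longrightarrow> N0 = b"
    using finite_has_maximal[OF fin] by blast
  have "N0 \<in> ch"
    unfolding md_children_def md_node_def
  proof (intro CollectI conjI)
    show "strong_module V adj N0" "N0 \<noteq> {}" "N0 \<subset> Q" using N0(1) by auto
    show "\<not> (\<exists>N. strong_module V adj N \<and> N0 \<subset> N \<and> N \<subset> Q)"
    proof
      assume "\<exists>N. strong_module V adj N \<and> N0 \<subset> N \<and> N \<subset> Q"
      then obtain N where N: "strong_module V adj N" "N0 \<subset> N" "N \<subset> Q" by blast
      then have "N \<in> ?F" using N0(1) by auto
      then show False using N0(2) N(2) by blast
    qed
  qed
  then show ?thesis using N0(1) by blast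
qed

lemma repr:
  assumes "representatives ch X" "K \<in> ch"
  obtains r where "X \<inter> K = {r}"
  using assms unfolding representatives_def by (meson card_1_singletonE)

lemma repr_in:
  assumes "representatives ch X" "y \<in> X"
  obtains K where "K \<in> ch" "y \<in> K"
  using assms unfolding representatives_def by blast

lemma finR: "finite R"
proof (rule finite_subset[OF _ finV])
  show "R \<subseteq> V" using Rrep chV unfolding representatives_def by blast
qed

lemma cardR: "card R \<ge> 3"
proof -
  have "\<forall>K\<in>ch. \<exists>r. R \<inter> K = {r}" using repr[OF Rrep] by metis
  then obtain f where f: "\<forall>K\<in>ch. R \<inter> K = {f K}" by metis
  have "inj_on f ch"
  proof (rule inj_onI)
    fix K K' assume "K \<in> ch" "K' \<in> ch" "f K = f K'"
    then have "f K \<in> K \<inter> K'" using f by blast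
    then show "K = K'" using ch_disj \<open>K \<in> ch\<close> \<open>K' \<in> ch\<close> by blast
  qed
  moreover have "f ` ch \<subseteq> R" using f by blast
  ultimately have "card ch \<le> card R" using card_inj_on_le finR by blast
  then show ?thesis using ch3 by simp
qed

lemma prime_contra:
  assumes "S \<subseteq> R" "is_module R adj S" "card S \<ge> 2" "S \<noteq> R"
  shows False
  using Rpr assms unfolding prime_graph_def trivial_module_def by fastforce

lemma R_other:
  assumes "M \<in> ch" "R \<inter> M = {r}" "y \<in> R" "y \<noteq> r"
  shows "y \<notin> M"
  using assms by blast

lemma no_isolated:
  assumes M: "M \<in> ch"
  shows "\<exists>x\<in>V. x \<notin> M \<and> (\<exists>m\<in>M. adj x m)"
proof (rule ccontr)
  assume neg: "\<not> (\<exists>x\<in>V. x \<notin> M \<and> (\<exists>m\<in>M. adj x m))"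
  obtain r where r: "R \<inter> M = {r}" using repr[OF Rrep M] by blast
  let ?S = "R - {r}"
  have RV: "R \<subseteq> V" using finR Rrep chV unfolding representatives_def by blast
  have "is_module R adj ?S"
    unfolding is_module_def
  proof (intro conjI ballI)
    show "?S \<subseteq> R" by blast
  next
    fix y assume "y \<in> R - ?S"
    then have y: "y = r" by blast
    have "\<forall>m\<in>?S. \<not> adj y m"
    proof
      fix m assume m: "m \<in> ?S"
      then have "m \<notin> M" using r by blast
      moreover have "m \<in> V" using m RV by blast
      ultimately have "\<not> adj m r" using neg r by blast
      then show "\<not> adj y m" using y adj_sym by blast
    qed
    then show "(\<forall>m\<in>?S. adj y m) \<or> (\<forall>m\<in>?S. \<not> adj y m)" by blast
  qed
  moreover have "card ?S \<ge> 2"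
  proof -
    have "r \<in> R" using r by blast
    then have "card ?S = card R - 1" using finR by simp
    then show ?thesis using cardR by simp
  qed
  moreover have "?S \<noteq> R" using r by blast
  ultimately show False using prime_contra[of ?S] by blast
qed

lemma no_twins:
  assumes M: "M \<in> ch" and N: "N \<in> ch" and ne: "M \<noteq> N"
    and h: "\<forall>x\<in>V. x \<notin> M \<longrightarrow> x \<notin> N \<longrightarrow> ((\<exists>m\<in>M. adj x m) \<longleftrightarrow> (\<exists>n\<in>N. adj x n))"
  shows False
proof -
  obtain rM where rM: "R \<inter> M = {rM}" using repr[OF Rrep M] by blast
  obtain rN where rN: "R \<inter> N = {rN}" using repr[OF Rrep N] by blast
  have dj: "M \<inter> N = {}" using ch_disj[OF M N ne] .
  have neq: "rM \<noteq> rN" using rM rN dj by blast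
  have RV: "R \<subseteq> V" using finR Rrep chV unfolding representatives_def by blast
  let ?S = "{rM, rN}"
  have "is_module R adj ?S"
    unfolding is_module_def
  proof (intro conjI ballI)
    show "?S \<subseteq> R" using rM rN by blast
  next
    fix y assume y: "y \<in> R - ?S"
    have yM: "y \<notin> M" using y rM by blast
    have yN: "y \<notin> N" using y rN by blast
    have yV: "y \<in> V" using y RV by blast
    have "adj y rM \<longleftrightarrow> adj y rN"
    proof
      assume "adj y rM"
      then have "\<exists>n\<in>N. adj y n" using h yV yM yN rM by blast
      then show "adj y rN" using uniform[OF chD(1)[OF N] yV yN] rN by blast
    next
      assume "adj y rN"
      then have "\<exists>m\<in>M. adj y m" using h yV yM yN rN by blast
      then show "adj y rM" using uniform[OF chD(1)[OF M] yV yM] rM by blast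
    qed
    then show "(\<forall>m\<in>?S. adj y m) \<or> (\<forall>m\<in>?S. \<not> adj y m)" by blast
  qed
  moreover have "card ?S \<ge> 2" using neq by simp
  moreover have "?S \<noteq> R"
  proof
    assume "?S = R"
    then have "card R = 2" using neq by (metis card_2_iff)
    then show False using cardR by simp
  qed
  ultimately show False using prime_contra[of ?S] rM rN by blast
qed

lemma L1a:
  assumes M: "M \<in> ch" and N: "N \<in> ch" and ne: "M \<noteq> N"
    and par: "\<forall>m\<in>M. \<forall>n\<in>N. \<not> adj m n \<and> \<not> adj n m"
    and u: "u \<in> N" and u': "u' \<in> N" and v: "v \<in> M" and w: "w \<in> M"
    and ns: "\<not> ({v,w} \<subseteq> left u \<or> {v,w} \<subseteq> right u)"
    and ss: "{v,w} \<subseteq> left u' \<or> {v,w} \<subseteq> right u'"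
  shows False
proof -
  have dj: "M \<inter> N = {}" using ch_disj[OF M N ne] .
  have VV: "u \<in> V" "u' \<in> V" "v \<in> V" "w \<in> V" using chV M N u u' v w by blast+
  have d1: "u \<noteq> v" "u \<noteq> w" "u' \<noteq> v" "u' \<noteq> w" using dj u u' v w by blast+
  have na: "\<not> adj u v" "\<not> adj u w" "\<not> adj u' v" "\<not> adj u' w"
     "\<not> adj v u" "\<not> adj w u" "\<not> adj v u'" "\<not> adj w u'"
    using par u u' v w by blast+
  have nn: "nonadj adj u v" "nonadj adj u w" "nonadj adj u' v" "nonadj adj u' w"
    using d1 na unfolding nonadj_def by auto
  have s1: "Cu u (pp v False) \<noteq> Cu u (pp w False)"
    using ssC[OF VV(1,3,4) nn(1,2)] ns by blast
  have s2: "Cu u' (pp v False) = Cu u' (pp w False)"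
    using ssC[OF VV(2,3,4) nn(3,4)] ss by blast
  have vw: "v \<noteq> w" using s1 by blast
  have uu: "u \<noteq> u'" using s1 s2 by blast
  have NoM: "\<And>x. x \<in> V \<Longrightarrow> x \<notin> M \<Longrightarrow> adj x v \<Longrightarrow> adj x w \<Longrightarrow> adj x u"
  proof -
    fix x assume x: "x \<in> V" "x \<notin> M" "adj x v" "adj x w"
    have "x \<notin> N" using par x(3) v by blast
    then have "distinct [u,v,w,x]" using x u d1 vw v w by auto
    then show "adj x u" using gsep[OF VV(1,3,4) x(1) _ na(1,2) s1 x(3,4)] by blast
  qed
  show False
  proof (cases "Cu v (pp u' False) = Cu v (pp u False) \<and> Cu w (pp u' False) = Cu w (pp u False)")
    case True
    obtain x m where x: "x \<in> V" "x \<notin> M" "m \<in> M" "adj x m" using no_isolated[OF M] by blast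
    have xv: "adj x v" "adj x w" using uniform[OF chD(1)[OF M] x(1,2) x(3)] x(4) v w by blast+
    have xN: "x \<notin> N" using par x(3,4) by blast
    have xu: "adj x u" using NoM x(1,2) xv by blast
    have xu': "adj x u'" using uniform[OF chD(1)[OF N] x(1) xN u u' xu] .
    have "distinct [u,u',v,w,x]" using uu d1 vw xN x(2) u u' v w by auto
    then show False
      using gA[OF VV x(1) _ na(1-4) s1 s2 _ _ xu xu' xv] True by blast
  next
    case False
    then obtain z where z: "z \<in> M" "Cu z (pp u' False) \<noteq> Cu z (pp u False)"
      using v w by blast
    have zV: "z \<in> V" using z(1) chV M by blast
    have zn: "\<not> adj z u'" "\<not> adj z u" using par z(1) u u' by blast+
    have zd: "z \<noteq> u" "z \<noteq> u'" using dj z(1) u u' by blast+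
    show False
    proof (rule no_twins[OF M N ne], intro ballI impI)
      fix x assume x: "x \<in> V" "x \<notin> M" "x \<notin> N"
      show "(\<exists>m\<in>M. adj x m) \<longleftrightarrow> (\<exists>n\<in>N. adj x n)"
      proof
        assume "\<exists>m\<in>M. adj x m"
        then have "adj x v" "adj x w" using uniform[OF chD(1)[OF M] x(1,2)] v w by blast+
        then have "adj x u" using NoM x by blast
        then show "\<exists>n\<in>N. adj x n" using u by blast
      next
        assume "\<exists>n\<in>N. adj x n"
        then have xu: "adj x u" "adj x u'" using uniform[OF chD(1)[OF N] x(1,3)] u u' by blast+
        have "distinct [z,u',u,x]" using zd uu x z(1) u u' by auto
        then have "adj x z" using gsep[OF zV VV(2,1) x(1) _ zn z(2) xu(2,1)] by blast
        then show "\<exists>m\<in>M. adj x m" using z(1) by blast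
      qed
    qed
  qed
qed

lemma L1:
  assumes M: "M \<in> ch" and N: "N \<in> ch" and ne: "M \<noteq> N"
    and par: "\<forall>m\<in>M. \<forall>n\<in>N. \<not> adj m n \<and> \<not> adj n m"
    and u: "u \<in> N" and u': "u' \<in> N" and v: "v \<in> M" and w: "w \<in> M"
  shows "({v,w} \<subseteq> left u \<or> {v,w} \<subseteq> right u) \<longleftrightarrow> ({v,w} \<subseteq> left u' \<or> {v,w} \<subseteq> right u')"
  using L1a[OF M N ne par u u' v w] L1a[OF M N ne par u' u v w] by blast

lemma ch_par:
  assumes K: "K \<in> ch" and M: "M \<in> ch" and ne: "K \<noteq> M" and u: "u \<in> K"
    and nu: "\<forall>m\<in>M. nonadj adj u m"
  shows "\<forall>m\<in>M. \<forall>n\<in>K. \<not> adj m n \<and> \<not> adj n m"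
proof (intro ballI)
  fix m n assume m: "m \<in> M" and n: "n \<in> K"
  have mK: "m \<notin> K" using ch_disj[OF K M ne] m by blast
  have mV: "m \<in> V" using chV M m by blast
  have "\<not> adj m u" using nu m adj_sym unfolding nonadj_def by blast
  then have "\<not> adj m n" using uniform[OF chD(1)[OF K] mV mK n u] by blast
  then show "\<not> adj m n \<and> \<not> adj n m" using adj_sym by blast
qed

lemma Zchar:
  assumes M: "M \<in> ch" and v: "v \<in> M" and z: "z \<in> V" "z \<notin> M"
  shows "nonadj adj v z \<longleftrightarrow> (\<forall>m\<in>M. nonadj adj z m)"
proof
  assume "nonadj adj v z"
  then have "\<not> adj z v" using adj_sym unfolding nonadj_def by blast
  then show "\<forall>m\<in>M. nonadj adj z m"
    using uniform[OF chD(1)[OF M] z _ v] z(2) unfolding nonadj_def by blast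
next
  assume "\<forall>m\<in>M. nonadj adj z m"
  then show "nonadj adj v z" using v adj_sym unfolding nonadj_def by blast
qed

end

theorem mainTheorem2:
  fixes V :: "'a set" and adj :: "'a \<Rightarrow> 'a \<Rightarrow> bool"
    and left right :: "'a \<Rightarrow> 'a set" and Q U M :: "'a set" and v w :: 'a
  assumes "simple_graph V adj"
    and "side_data V adj left right"
    and "has_conformal_model V adj left right"
    and "prime_node V adj Q"
    and "U \<subseteq> Q" and "representatives (md_children V adj Q) U"
    and "M \<in> md_children V adj Q" and "v \<in> M" and "w \<in> M"
  shows "(parallel_module adj M \<longrightarrow>
           ((\<forall>u\<in>Q - M. (\<forall>m\<in>M. nonadj adj u m) \<longrightarrow>
               ({v, w} \<subseteq> left u \<or> {v, w} \<subseteq> right u))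
        \<longleftrightarrow> (\<forall>u\<in>U - M. (\<forall>m\<in>M. nonadj adj u m) \<longrightarrow>
               ({v, w} \<subseteq> left u \<or> {v, w} \<subseteq> right u))))
       \<and> (serial_module adj M \<longrightarrow>
           ({left v \<inter> (Q - M), right v \<inter> (Q - M)} = {left w \<inter> (Q - M), right w \<inter> (Q - M)}
        \<longleftrightarrow> {left v \<inter> (U - M), right v \<inter> (U - M)} = {left w \<inter> (U - M), right w \<inter> (U - M)}))"
proof -
  obtain wd where wd: "conformal_model V adj left right wd"
    using assms(3) unfolding has_conformal_model_def by blast
  obtain R where R: "representatives (md_children V adj Q) R" "prime_graph R adj"
    and Qn: "md_node V adj Q" and c3: "card (md_children V adj Q) \<ge> 3"
    using assms(4) unfolding prime_node_def by blast
  interpret S: setting V adj left right Q R wd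
    using assms(1,2) wd Qn c3 R by (unfold_locales) auto
  note M = assms(7) and v = assms(8) and w = assms(9) and UQ = assms(5) and Urep = assms(6)
  have MV: "M \<subseteq> V" using S.chV M by blast
  have transfer: "\<exists>K u'. K \<in> md_children V adj Q \<and> K \<noteq> M \<and> z \<in> K \<and> u' \<in> K \<and> u' \<in> U - M
      \<and> (\<forall>m\<in>M. nonadj adj u' m) \<and> (\<forall>m\<in>M. \<forall>n\<in>K. \<not> adj m n \<and> \<not> adj n m)"
    if z: "z \<in> Q - M" "\<forall>m\<in>M. nonadj adj z m" for z
  proof -
    obtain K where K: "K \<in> md_children V adj Q" "z \<in> K" using S.ch_cover z(1) by blast
    have KM: "K \<noteq> M" using K(2) z(1) by blast
    obtain u' where u': "U \<inter> K = {u'}" using S.repr[OF Urep K(1)] by blast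
    have par: "\<forall>m\<in>M. \<forall>n\<in>K. \<not> adj m n \<and> \<not> adj n m" using S.ch_par[OF K(1) M KM K(2) z(2)] .
    have u'K: "u' \<in> K" "u' \<in> U" using u' by blast+
    have u'M: "u' \<notin> M" using S.ch_disj[OF K(1) M KM] u'K by blast
    have "\<forall>m\<in>M. nonadj adj u' m" using par u'K u'M unfolding nonadj_def by blast
    then show ?thesis using K KM u'K u'M par by blast
  qed
  have part1: "(\<forall>u\<in>Q - M. (\<forall>m\<in>M. nonadj adj u m) \<longrightarrow> ({v, w} \<subseteq> left u \<or> {v, w} \<subseteq> right u))
        \<longleftrightarrow> (\<forall>u\<in>U - M. (\<forall>m\<in>M. nonadj adj u m) \<longrightarrow> ({v, w} \<subseteq> left u \<or> {v, w} \<subseteq> right u))"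
  proof
    assume "\<forall>u\<in>Q - M. (\<forall>m\<in>M. nonadj adj u m) \<longrightarrow> ({v, w} \<subseteq> left u \<or> {v, w} \<subseteq> right u)"
    then show "\<forall>u\<in>U - M. (\<forall>m\<in>M. nonadj adj u m) \<longrightarrow> ({v, w} \<subseteq> left u \<or> {v, w} \<subseteq> right u)"
      using UQ by blast
  next
    assume b: "\<forall>u\<in>U - M. (\<forall>m\<in>M. nonadj adj u m) \<longrightarrow> ({v, w} \<subseteq> left u \<or> {v, w} \<subseteq> right u)"
    show "\<forall>u\<in>Q - M. (\<forall>m\<in>M. nonadj adj u m) \<longrightarrow> ({v, w} \<subseteq> left u \<or> {v, w} \<subseteq> right u)"
    proof (intro ballI impI)
      fix u assume u: "u \<in> Q - M" "\<forall>m\<in>M. nonadj adj u m"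
      obtain K u' where K: "K \<in> md_children V adj Q" "K \<noteq> M" "u \<in> K" "u' \<in> K" "u' \<in> U - M"
        "\<forall>m\<in>M. nonadj adj u' m" "\<forall>m\<in>M. \<forall>n\<in>K. \<not> adj m n \<and> \<not> adj n m"
        using transfer[OF u] by blast
      have "{v, w} \<subseteq> left u' \<or> {v, w} \<subseteq> right u'" using b K(5,6) by blast
      then show "{v, w} \<subseteq> left u \<or> {v, w} \<subseteq> right u"
        using S.L1[OF M K(1) K(2)[symmetric] K(7) K(3) K(4) v w] by blast
    qed
  qed
  define Z where "Z = {z. \<forall>m\<in>M. nonadj adj z m}"
  have sides: "\<forall>z\<in>X. (z \<in> left x \<or> z \<in> right x) \<longleftrightarrow> z \<in> Z"
    "\<forall>z\<in>X. \<not> (z \<in> left x \<and> z \<in> right x)"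
    if X: "X \<subseteq> Q - M" and x: "x \<in> M" for X x
  proof -
    have xV: "x \<in> V" using x MV by blast
    have lr: "left x \<union> right x = {y\<in>V. nonadj adj x y}" "left x \<inter> right x = {}"
      using assms(2) xV unfolding side_data_def by auto
    show "\<forall>z\<in>X. (z \<in> left x \<or> z \<in> right x) \<longleftrightarrow> z \<in> Z"
    proof
      fix z assume "z \<in> X"
      then have z: "z \<in> V" "z \<notin> M" using X S.QV by blast+
      have "(z \<in> left x \<or> z \<in> right x) \<longleftrightarrow> nonadj adj x z" using lr(1) z(1) by blast
      also have "\<dots> \<longleftrightarrow> z \<in> Z" using S.Zchar[OF M x z] unfolding Z_def by simp
      finally show "(z \<in> left x \<or> z \<in> right x) \<longleftrightarrow> z \<in> Z" .
    qed
    show "\<forall>z\<in>X. \<not> (z \<in> left x \<and> z \<in> right x)" using lr(2) by blast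
  qed
  have PE: "{left v \<inter> X, right v \<inter> X} = {left w \<inter> X, right w \<inter> X} \<longleftrightarrow>
     ((\<forall>z\<in>Z\<inter>X. (z\<in>left v) = (z\<in>left w)) \<or> (\<forall>z\<in>Z\<inter>X. (z\<in>left v) \<noteq> (z\<in>left w)))"
    if X: "X \<subseteq> Q - M" for X
    by (rule pair_eq[OF sides[OF X v] sides[OF X w]])
  have key: "\<exists>u\<in>Z \<inter> (U - M). ((z\<in>left v) = (z\<in>left w)) \<longleftrightarrow> ((u\<in>left v) = (u\<in>left w))"
    if z: "z \<in> Z \<inter> (Q - M)" for z
  proof -
    have zz: "z \<in> Q - M" "\<forall>m\<in>M. nonadj adj z m" using z unfolding Z_def by auto
    obtain K u' where K: "K \<in> md_children V adj Q" "K \<noteq> M" "z \<in> K" "u' \<in> K" "u' \<in> U - M"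
        "\<forall>m\<in>M. nonadj adj u' m" "\<forall>m\<in>M. \<forall>n\<in>K. \<not> adj m n \<and> \<not> adj n m"
      using transfer[OF zz] by blast
    have par': "\<forall>m\<in>K. \<forall>n\<in>M. \<not> adj m n \<and> \<not> adj n m" using K(7) by blast
    have L: "({z,u'} \<subseteq> left v \<or> {z,u'} \<subseteq> right v) \<longleftrightarrow> ({z,u'} \<subseteq> left w \<or> {z,u'} \<subseteq> right w)"
      using S.L1[OF K(1) M K(2) par' v w K(3) K(4)] .
    have zV: "z \<in> V" "z \<notin> M" using zz(1) S.QV by blast+
    have uV: "u' \<in> V" "u' \<notin> M" using K(5) UQ S.QV by blast+
    have vV: "v \<in> V" and wV: "w \<in> V" using v w MV by blast+
    have nz: "nonadj adj v z" "nonadj adj w z" using S.Zchar[OF M v zV] S.Zchar[OF M w zV] zz(2) by blast+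
    have nu: "nonadj adj v u'" "nonadj adj w u'" using S.Zchar[OF M v uV] S.Zchar[OF M w uV] K(6) by blast+
    have Lv: "({z,u'} \<subseteq> left v \<or> {z,u'} \<subseteq> right v) \<longleftrightarrow> ((z\<in>left v) = (u'\<in>left v))"
      using S.ssC[OF vV zV(1) uV(1) nz(1) nu(1)] S.leftC[OF vV zV(1) nz(1)] S.leftC[OF vV uV(1) nu(1)]
      by simp
    have Lw: "({z,u'} \<subseteq> left w \<or> {z,u'} \<subseteq> right w) \<longleftrightarrow> ((z\<in>left w) = (u'\<in>left w))"
      using S.ssC[OF wV zV(1) uV(1) nz(2) nu(2)] S.leftC[OF wV zV(1) nz(2)] S.leftC[OF wV uV(1) nu(2)]
      by simp
    have "u' \<in> Z \<inter> (U - M)" using K(5,6) unfolding Z_def by blast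
    moreover have "((z\<in>left v) = (z\<in>left w)) \<longleftrightarrow> ((u'\<in>left v) = (u'\<in>left w))"
      using L Lv Lw by blast
    ultimately show ?thesis by blast
  qed
  have UM: "U - M \<subseteq> Q - M" using UQ by blast
  have part2: "{left v \<inter> (Q - M), right v \<inter> (Q - M)} = {left w \<inter> (Q - M), right w \<inter> (Q - M)}
        \<longleftrightarrow> {left v \<inter> (U - M), right v \<inter> (U - M)} = {left w \<inter> (U - M), right w \<inter> (U - M)}"
    unfolding PE[OF order.refl] PE[OF UM]
  proof
    assume "(\<forall>z\<in>Z\<inter>(Q - M). (z\<in>left v) = (z\<in>left w)) \<or> (\<forall>z\<in>Z\<inter>(Q - M). (z\<in>left v) \<noteq> (z\<in>left w))"
    then show "(\<forall>z\<in>Z\<inter>(U - M). (z\<in>left v) = (z\<in>left w)) \<or> (\<forall>z\<in>Z\<inter>(U - M). (z\<in>left v) \<noteq> (z\<in>left w))"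
      using UM by blast
  next
    assume h: "(\<forall>z\<in>Z\<inter>(U - M). (z\<in>left v) = (z\<in>left w)) \<or> (\<forall>z\<in>Z\<inter>(U - M). (z\<in>left v) \<noteq> (z\<in>left w))"
    show "(\<forall>z\<in>Z\<inter>(Q - M). (z\<in>left v) = (z\<in>left w)) \<or> (\<forall>z\<in>Z\<inter>(Q - M). (z\<in>left v) \<noteq> (z\<in>left w))"
    proof (cases "\<forall>z\<in>Z\<inter>(U - M). (z\<in>left v) = (z\<in>left w)")
      case True
      have "\<forall>z\<in>Z\<inter>(Q - M). (z\<in>left v) = (z\<in>left w)"
      proof
        fix z assume "z \<in> Z \<inter> (Q - M)"
        then obtain u where "u \<in> Z \<inter> (U - M)" "((z\<in>left v) = (z\<in>left w)) \<longleftrightarrow> ((u\<in>left v) = (u\<in>left w))"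
          using key by blast
        then show "(z\<in>left v) = (z\<in>left w)" using True by blast
      qed
      then show ?thesis by blast
    next
      case False
      then have F: "\<forall>z\<in>Z\<inter>(U - M). (z\<in>left v) \<noteq> (z\<in>left w)" using h by blast
      have "\<forall>z\<in>Z\<inter>(Q - M). (z\<in>left v) \<noteq> (z\<in>left w)"
      proof
        fix z assume "z \<in> Z \<inter> (Q - M)"
        then obtain u where "u \<in> Z \<inter> (U - M)" "((z\<in>left v) = (z\<in>left w)) \<longleftrightarrow> ((u\<in>left v) = (u\<in>left w))"
          using key by blast
        then show "(z\<in>left v) \<noteq> (z\<in>left w)" using F by blast
      qed
      then show ?thesis by blast
    qed
  qed
  show ?thesis using part1 part2 by blast
qed

end
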